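(* Let $n\ge3$, $\rho\in[0,1]$, $\alpha\in[0,\tfrac{\pi}{2}]$ and $x\in(-1,1)$. Then $$\int_{-\sqrt{1-x^2}}^{\sqrt{1-x^2}} \frac{(1-x^2-y^2)^{\frac{n}{2}-2}}{(1-2\rho x \cos \alpha - 2 \rho y \sin\alpha + \rho^2)^{\frac{n}{2}-1}}\, dy =\mathrm{B}\big(\tfrac12,\tfrac{n}{2}-1\big) \frac{(1-x^2)^{\frac{n-3}{2}}}{(1+\rho^2-2\rho x \cos\alpha)^{\frac{n}{2}-1}}\, {}_2F_1\Big(\tfrac{n-2}{4},\tfrac{n}{4};\tfrac{n-1}{2};\tfrac{4\rho^2 \sin^2\alpha\, (1-x^2)}{(1+\rho^2-2\rho x \cos\alpha)^{2}}\Big).$$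
   Context: $\mathrm{B}$ is the Euler Beta function and ${}_2F_1$ the Gauss hypergeometric function. *)

theory Defs
  imports "HOL-Analysis.Analysis"
begin

text \<open>For parameters a,b,c > 0 and z >= 0 all terms
  are nonnegative, and we take the sum in the extended nonnegative reals, so that the
  value is +infinity exactly when the series diverges.\<close>
definition hyp2F1 :: "real \<Rightarrow> real \<Rightarrow> real \<Rightarrow> real \<Rightarrow> ennreal" where
  "hyp2F1 a b c z =
     (\<Sum>k. ennreal (pochhammer a k * pochhammer b k / (pochhammer c k * fact k) * z ^ k))"

end

theory Submission
  imports Defs
begin


lemma beta_poch:
  fixes m :: real
  assumes m: "m > -1"
  shows "Beta (real j + 1/2) (m+1) * pochhammer (m + 3/2) j = Beta (1/2) (m+1) * pochhammer (1/2) j"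
proof (induction j)
  case 0 then show ?case by simp
next
  case (Suc j)
  have nz: "real j + 1/2 \<notin> \<int>\<^sub>\<le>\<^sub>0"
  proof
    assume "real j + 1/2 \<in> \<int>\<^sub>\<le>\<^sub>0"
    then have "real j + 1/2 \<le> 0" by (rule nonpos_Ints_nonpos)
    then show False by simp
  qed
  have step: "(real j + 1/2 + (m+1)) * Beta (real j + 1/2 + 1) (m+1) = (real j + 1/2) * Beta (real j + 1/2) (m+1)"
    by (rule Beta_plus1_left[OF nz])
  have "Beta (real (Suc j) + 1/2) (m+1) * pochhammer (m + 3/2) (Suc j)
      = ((real j + 1/2 + (m+1)) * Beta (real j + 1/2 + 1) (m+1)) * pochhammer (m + 3/2) j"
    by (simp add: pochhammer_rec' algebra_simps)
  also have "\<dots> = (real j + 1/2) * (Beta (real j + 1/2) (m+1) * pochhammer (m + 3/2) j)"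
    using step by (simp add: algebra_simps)
  also have "\<dots> = (real j + 1/2) * (Beta (1/2) (m+1) * pochhammer (1/2) j)"
    by (simp only: Suc.IH)
  also have "\<dots> = Beta (1/2) (m+1) * pochhammer (1/2) (Suc j)"
    by (simp add: pochhammer_rec' algebra_simps)
  finally show ?case .
qed

lemma coeff_id:
  fixes m s :: real
  assumes m: "m > -1"
  shows "pochhammer s (2*j) / fact (2*j) * Beta (real j + 1/2) (m+1)
       = Beta (1/2) (m+1) * (pochhammer (s/2) j * pochhammer (s/2 + 1/2) j / (pochhammer (m + 3/2) j * fact j))"
proof -
  have pd: "pochhammer s (2*j) = 2^(2*j) * pochhammer (s/2) j * pochhammer (s/2 + 1/2) j"
    using pochhammer_double[of "s/2" j] by simp
  have fd: "fact (2*j) = (2^(2*j) * pochhammer (1/2) j * fact j :: real)" by (rule fact_double)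
  have p1: "pochhammer (1/2::real) j > 0" by (rule pochhammer_pos) simp
  have p2: "pochhammer (m + 3/2) j > 0" by (rule pochhammer_pos) (use m in simp)
  have bp: "Beta (real j + 1/2) (m+1) = Beta (1/2) (m+1) * pochhammer (1/2) j / pochhammer (m + 3/2) j"
    using beta_poch[OF m, of j] p2 by (simp add: field_simps)
  show ?thesis unfolding pd fd bp using p1 p2 by (simp add: field_simps)
qed

lemma binom_even:
  fixes s t :: real
  assumes t: "\<bar>t\<bar> < 1"
  shows "(\<lambda>j. 2 * (pochhammer s (2*j) / fact (2*j)) * t^(2*j)) sums ((1-t) powr (-s) + (1+t) powr (-s))"
proof -
  have a: "(\<lambda>k. ((-s) gchoose k) * (-t)^k) sums (1 + (-t)) powr (-s)"
    by (rule gen_binomial_real) (use t in simp)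
  have b: "(\<lambda>k. ((-s) gchoose k) * t^k) sums (1 + t) powr (-s)"
    by (rule gen_binomial_real) (use t in simp)
  define h where "h k = ((-s) gchoose k) * (-t)^k + ((-s) gchoose k) * t^k" for k
  have "h sums ((1-t) powr (-s) + (1+t) powr (-s))"
    unfolding h_def using sums_add[OF a b] by simp
  from sums_group[OF this, of 2]
  have "(\<lambda>j. sum h {j*2..<j*2+2}) sums ((1-t) powr (-s) + (1+t) powr (-s))" by simp
  moreover have "sum h {j*2..<j*2+2} = 2 * (pochhammer s (2*j) / fact (2*j)) * t^(2*j)" for j
  proof -
    have "{j*2..<j*2+2} = {2*j, Suc (2*j)}" by auto
    then have "sum h {j*2..<j*2+2} = h (2*j) + h (Suc (2*j))" by simp
    also have "h (Suc (2*j)) = 0" unfolding h_def by simp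
    also have "h (2*j) = 2 * (pochhammer s (2*j) / fact (2*j)) * t^(2*j)"
      unfolding h_def by (simp add: gbinomial_pochhammer power_mult)
    finally show ?thesis by simp
  qed
  ultimately show ?thesis by simp
qed

lemma reflect:
  fixes h :: "real \<Rightarrow> ennreal" and r :: real
  assumes hm[measurable]: "h \<in> borel_measurable borel"
  shows "(\<integral>\<^sup>+y\<in>{-r..r}. h y \<partial>lborel) = (\<integral>\<^sup>+y. (h y + h (-y)) * indicator {0..r} y \<partial>lborel)"
proof -
  have "(\<integral>\<^sup>+y\<in>{-r..r}. h y \<partial>lborel) = (\<integral>\<^sup>+y. h y * indicator {-r..<0} y + h y * indicator {0..r} y \<partial>lborel)"
    by (intro nn_integral_cong) (auto simp: indicator_def)
  also have "\<dots> = (\<integral>\<^sup>+y. h y * indicator {-r..<0} y \<partial>lborel) + (\<integral>\<^sup>+y. h y * indicator {0..r} y \<partial>lborel)"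
    by (rule nn_integral_add) auto
  also have "(\<integral>\<^sup>+y. h y * indicator {-r..<0} y \<partial>lborel) = (\<integral>\<^sup>+y. h y * indicator {-r..<0} y \<partial>distr lborel borel uminus)"
    by (simp add: lborel_distr_uminus)
  also have "\<dots> = (\<integral>\<^sup>+y. h (-y) * indicator {-r..<0} (-y) \<partial>lborel)"
    by (subst nn_integral_distr) auto
  also have "\<dots> = (\<integral>\<^sup>+y. h (-y) * indicator {0..r} y \<partial>lborel)"
    by (intro nn_integral_cong_AE eventually_mono[OF AE_lborel_singleton[of 0]]) (auto simp: indicator_def)
  also have "(\<integral>\<^sup>+y. h (-y) * indicator {0..r} y \<partial>lborel) + (\<integral>\<^sup>+y. h y * indicator {0..r} y \<partial>lborel)
      = (\<integral>\<^sup>+y. h (-y) * indicator {0..r} y + h y * indicator {0..r} y \<partial>lborel)"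
    by (rule nn_integral_add[symmetric]) auto
  also have "\<dots> = (\<integral>\<^sup>+y. (h y + h (-y)) * indicator {0..r} y \<partial>lborel)"
    by (intro nn_integral_cong) (simp add: algebra_simps)
  finally show ?thesis .
qed



lemma p1: "0 < (u::real) \<Longrightarrow> (u^2) powr (real j + 1/2 - 1) = u^(2*j) / u"
proof -
  assume u: "0 < u"
  have "(u^2) powr (real j + 1/2 - 1) = (u powr 2) powr (real j + 1/2 - 1)" using u by simp
  also have "\<dots> = u powr (real (2*j) - 1)" by (simp add: powr_powr algebra_simps)
  also have "\<dots> = u^(2*j) / u" using u powr_realpow[OF u, of "2*j"] by (simp add: powr_diff)
  finally show ?thesis .
qed
lemma r2: "0 < (r::real) \<Longrightarrow> (r^2) powr m = r powr (2*m)"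
proof -
  assume r: "0 < r"
  have "(r^2) powr m = (r powr 2) powr m" using r by simp
  also have "\<dots> = r powr (2*m)" by (simp add: powr_powr)
  finally show ?thesis .
qed
lemma alg: "(R::real) > 0 \<Longrightarrow> r > 0 \<Longrightarrow> u > 0 \<Longrightarrow>
  (R * r^k * r) / 2 * (u^k/u) * (P/R) * (2*(r*u)/r^2) = P * (r*u)^k"
  by (simp add: field_simps power_mult_distrib power2_eq_square)

lemma half_beta:
  fixes r m :: real and j :: nat
  assumes r: "r > 0" and m: "m > -1"
  shows "(\<integral>\<^sup>+y. ennreal ((r\<^sup>2 - y\<^sup>2) powr m * y^(2*j) * indicator {0..r} y) \<partial>lborel)
       = ennreal (r powr (2*m+2*j+1) * Beta (j+1/2) (m+1) / 2)"
proof -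
  define C where "C = r powr (2*m+2*j+1)"
  define a where "a = real j + 1/2"
  define b where "b = m + 1"
  have a: "a > 0" and b: "b > 0" using m by (auto simp: a_def b_def)
  define f where "f t = C / 2 * (t powr (a - 1) * (1 - t) powr (b - 1))" for t
  have hi: "(f has_integral (C/2 * Beta a b)) {0..1}"
    unfolding f_def by (intro has_integral_mult_right has_integral_Beta_real a b)
  have "integral\<^sup>N lborel (\<lambda>x. indicator {0..1} x * f x) = ennreal (C/2 * Beta a b)"
    by (rule nn_integral_has_integral_lebesgue[OF _ hi]) (auto simp: f_def C_def)
  hence I1: "(\<integral>\<^sup>+t. ennreal (f t * indicator {0..1} t) \<partial>lborel) = ennreal (C/2 * Beta a b)"
    by (simp add: mult.commute)
  define g where "g y = y^2/r^2" for y
  have r4: "r ^ 4 = r\<^sup>2 * r\<^sup>2" by algebra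
  have g0: "g 0 = 0" and gr: "g r = 1" using r by (auto simp: g_def)
  have meas: "set_borel_measurable borel {g 0..g r} f"
    unfolding f_def set_borel_measurable_def by measurable
  have S: "(\<integral>\<^sup>+t. ennreal (f t * indicator {g 0..g r} t) \<partial>lborel) =
         (\<integral>\<^sup>+y. ennreal (f (g y) * (2*y/r^2) * indicator {0..r} y) \<partial>lborel)"
  proof (rule nn_integral_substitution[of g 0 r f, OF meas])
    fix y :: real
    show "(g has_real_derivative 2*y/r^2) (at y)"
      unfolding g_def
    proof (rule DERIV_cdivide)
      show "((\<lambda>y. y^2) has_real_derivative 2*y) (at y)"
        by (auto intro!: derivative_eq_intros)
    qed
  next
    show "continuous_on {0..r} (\<lambda>y. 2*y/r^2)" using r by (intro continuous_intros) auto
  next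
    fix y :: real assume "y \<in> {0..r}"
    thus "0 \<le> 2*y/r^2" by simp
  qed (use r in simp)
  have E: "f (g y) * (2*y/r^2) * indicator {0..r} y = (r\<^sup>2 - y\<^sup>2) powr m * y^(2*j) * indicator {0..r} y"
    if "y \<noteq> 0" for y
  proof (cases "y \<in> {0..r}")
    case True
    with that have y: "0 < y" "y \<le> r" by auto
    define u where "u = y / r"
    have u: "0 < u" "u \<le> 1" using y r by (auto simp: u_def)
    have yu: "y = r * u" using r by (simp add: u_def)
    have g: "g y = u^2" by (simp add: g_def u_def power_divide)
    have p1: "(u^2) powr (a - 1) = u^(2*j) / u" using p1[OF u(1), of j] by (simp add: a_def)
    have p2: "(1 - u^2) powr (b - 1) = (r\<^sup>2 - y\<^sup>2) powr m / r powr (2*m)"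
    proof -
      have "1 - u^2 = (r\<^sup>2 - y\<^sup>2) / r^2" using r by (simp add: u_def power_divide field_simps)
      moreover have "(r^2) powr m = r powr (2*m)" using r2[OF r] .
      moreover have "r\<^sup>2 - y\<^sup>2 \<ge> 0" using y by (simp add: abs_le_square_iff) 
      ultimately show ?thesis using r by (simp add: b_def powr_divide)
    qed
    have C: "C = r powr (2*m) * r^(2*j) * r" using r powr_realpow[OF r, of "2*j"]
      by (simp add: C_def powr_add)
    have "f (g y) * (2*y/r^2) = C / 2 * (u^(2*j) / u) * ((r\<^sup>2 - y\<^sup>2) powr m / r powr (2*m)) * (2*y/r^2)"
      by (simp add: f_def g p1 p2)
    also have "\<dots> = (r\<^sup>2 - y\<^sup>2) powr m * (r * u)^(2*j)"
      unfolding C yu by (rule alg) (use r u in auto)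
    finally show ?thesis using True yu by simp
  qed simp

  have "(\<integral>\<^sup>+y. ennreal ((r\<^sup>2 - y\<^sup>2) powr m * y^(2*j) * indicator {0..r} y) \<partial>lborel)
      = (\<integral>\<^sup>+y. ennreal (f (g y) * (2*y/r^2) * indicator {0..r} y) \<partial>lborel)"
    by (intro nn_integral_cong_AE eventually_mono[OF AE_lborel_singleton[of 0]]) (metis E)
  also have "\<dots> = ennreal (C/2 * Beta a b)" using S I1 g0 gr by simp
  finally show ?thesis by (simp add: C_def a_def b_def)
qed




theorem lemma2:
  fixes n :: nat and \<rho> \<alpha> x :: real
  assumes "n \<ge> 3" and "0 \<le> \<rho>" and "\<rho> \<le> 1"
    and "0 \<le> \<alpha>" and "\<alpha> \<le> pi / 2"
    and "-1 < x" and "x < 1"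
  shows "(\<integral>\<^sup>+ y \<in> {- sqrt (1 - x\<^sup>2) .. sqrt (1 - x\<^sup>2)}.
            ennreal ((1 - x\<^sup>2 - y\<^sup>2) powr (real n / 2 - 2)
              / (1 - 2 * \<rho> * x * cos \<alpha> - 2 * \<rho> * y * sin \<alpha> + \<rho>\<^sup>2) powr (real n / 2 - 1))
          \<partial>lborel)
       = ennreal (Beta (1/2) (real n / 2 - 1)
            * (1 - x\<^sup>2) powr ((real n - 3) / 2)
            / (1 + \<rho>\<^sup>2 - 2 * \<rho> * x * cos \<alpha>) powr (real n / 2 - 1))
         * hyp2F1 ((real n - 2) / 4) (real n / 4) ((real n - 1) / 2)
             (4 * \<rho>\<^sup>2 * (sin \<alpha>)\<^sup>2 * (1 - x\<^sup>2) / (1 + \<rho>\<^sup>2 - 2 * \<rho> * x * cos \<alpha>)\<^sup>2)"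
proof -
  note n = assms(1) and \<rho>0 = assms(2) and \<rho>1 = assms(3) and \<alpha>0 = assms(4) and \<alpha>1 = assms(5)
    and x0 = assms(6) and x1 = assms(7)
  define r where "r = sqrt (1 - x\<^sup>2)"
  have x2: "x\<^sup>2 < 1" using x0 x1 by (simp add: abs_square_less_1)
  have r: "r > 0" using x2 by (simp add: r_def)
  have r2: "r\<^sup>2 = 1 - x\<^sup>2" using x2 by (simp add: r_def)
  define s where "s = real n / 2 - 1"
  define m where "m = real n / 2 - 2"
  have s: "s > 0" and m: "m > -1" using n by (auto simp: s_def m_def)
  define A where "A = 1 + \<rho>\<^sup>2 - 2 * \<rho> * x * cos \<alpha>"
  define b where "b = 2 * \<rho> * sin \<alpha>"
  have sin0: "sin \<alpha> \<ge> 0" using \<alpha>0 \<alpha>1 by (intro sin_ge_zero) auto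
  have b0: "b \<ge> 0" using sin0 \<rho>0 by (simp add: b_def)
  have A: "A > 0"
  proof -
    have c1: "(cos \<alpha>)\<^sup>2 \<le> 1" by (simp add: abs_square_le_1)
    have "x\<^sup>2 * (cos \<alpha>)\<^sup>2 \<le> x\<^sup>2" using mult_left_mono[OF c1, of "x\<^sup>2"] by simp
    moreover have "A = (\<rho> - x * cos \<alpha>)\<^sup>2 + (1 - x\<^sup>2 * (cos \<alpha>)\<^sup>2)"
      by (simp add: A_def power2_eq_square algebra_simps)
    moreover have "(\<rho> - x * cos \<alpha>)\<^sup>2 \<ge> 0" by simp
    ultimately show ?thesis using x2 by linarith
  qed
  have bA: "b * r \<le> A"
  proof -
    have id: "(x * cos \<alpha> + r * sin \<alpha>)\<^sup>2 + (x * sin \<alpha> - r * cos \<alpha>)\<^sup>2 = (x\<^sup>2 + r\<^sup>2) * ((sin \<alpha>)\<^sup>2 + (cos \<alpha>)\<^sup>2)"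
      by algebra
    have "(x * cos \<alpha> + r * sin \<alpha>)\<^sup>2 \<le> 1"
      using id r2 by (simp add: add_nonneg_nonneg) (smt (verit) zero_le_power2)
    hence w: "x * cos \<alpha> + r * sin \<alpha> \<le> 1" by (simp add: abs_square_le_1)
    have "2 * \<rho> * (x * cos \<alpha> + r * sin \<alpha>) \<le> 2 * \<rho>" using mult_left_mono[OF w, of "2*\<rho>"] \<rho>0 by simp
    moreover have "2 * \<rho> \<le> 1 + \<rho>\<^sup>2" using zero_le_power2[of "\<rho> - 1"] by (simp add: power2_eq_square algebra_simps)
    ultimately show ?thesis by (simp add: A_def b_def algebra_simps)
  qed
  define q where "q = b / A"
  have q0: "q \<ge> 0" using b0 A by (simp add: q_def)
  have qr: "q * r \<le> 1" using bA A by (simp add: q_def field_simps)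
  have Aq: "A * q = b" using A by (simp add: q_def)
  define G where "G y = (1 - x\<^sup>2 - y\<^sup>2) powr m / (1 - 2 * \<rho> * x * cos \<alpha> - 2 * \<rho> * y * sin \<alpha> + \<rho>\<^sup>2) powr s" for y
  have Gnn: "G y \<ge> 0" for y by (simp add: G_def)
  have den: "1 - 2 * \<rho> * x * cos \<alpha> - 2 * \<rho> * w * sin \<alpha> + \<rho>\<^sup>2 = A * (1 - q * w)" for w
  proof -
    have "A * (1 - q * w) = A - (A * q) * w" by (simp add: algebra_simps)
    also have "\<dots> = A - b * w" by (simp only: Aq)
    finally show ?thesis by (simp add: A_def b_def algebra_simps)
  qed
  define c where "c j = pochhammer s (2*j) / fact (2*j)" for j
  have c0: "c j \<ge> 0" for j unfolding c_def using pochhammer_pos[OF s, of "2*j"] by simp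
  define T where "T j y = A powr (-s) * (2 * c j * q^(2*j)) * ((r\<^sup>2 - y\<^sup>2) powr m * y^(2*j))" for j y
  have Tnn: "T j y \<ge> 0" for j y unfolding T_def using c0 q0 by (simp add: zero_le_even_power)
  have Gform: "G w = (r\<^sup>2 - w\<^sup>2) powr m * A powr (-s) * (1 - q * w) powr (-s)" if "1 - q * w > 0" for w
  proof -
    have "G w = (r\<^sup>2 - w\<^sup>2) powr m / (A * (1 - q * w)) powr s" by (simp add: G_def den r2)
    also have "\<dots> = (r\<^sup>2 - w\<^sup>2) powr m * A powr (-s) * (1 - q * w) powr (-s)"
      using A that by (simp add: powr_mult powr_minus divide_inverse)
    finally show ?thesis .
  qed
  have Tsums: "(\<lambda>j. T j y) sums (G y + G (-y))" if y: "0 \<le> y" "y < r" for y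
  proof -
    have qy: "\<bar>q * y\<bar> < 1"
    proof (cases "q = 0")
      case False
      then have "q * y < q * r" using q0 y by (intro mult_strict_left_mono) auto
      then show ?thesis using qr q0 y by simp
    qed simp
    have "(\<lambda>j. (r\<^sup>2 - y\<^sup>2) powr m * A powr (-s) * (2 * c j * (q*y)^(2*j))) sums
          ((r\<^sup>2 - y\<^sup>2) powr m * A powr (-s) * ((1 - q*y) powr (-s) + (1 + q*y) powr (-s)))"
      unfolding c_def by (intro sums_mult binom_even qy)
    moreover have "G y + G (-y) = (r\<^sup>2 - y\<^sup>2) powr m * A powr (-s) * ((1 - q*y) powr (-s) + (1 + q*y) powr (-s))"
      using Gform[of y] Gform[of "-y"] qy by (simp add: algebra_simps)
    moreover have "(r\<^sup>2 - y\<^sup>2) powr m * A powr (-s) * (2 * c j * (q*y)^(2*j)) = T j y" for j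
      by (simp add: T_def power_mult_distrib algebra_simps)
    ultimately show ?thesis by simp
  qed
  have Gm[measurable]: "(\<lambda>y. ennreal (G y)) \<in> borel_measurable borel" unfolding G_def by measurable
  have Tm[measurable]: "(\<lambda>y. ennreal (T j y * indicator {0..r} y)) \<in> borel_measurable borel" for j
    unfolding T_def by measurable
  have LHS: "(\<integral>\<^sup>+ y \<in> {- sqrt (1 - x\<^sup>2) .. sqrt (1 - x\<^sup>2)}.
            ennreal ((1 - x\<^sup>2 - y\<^sup>2) powr (real n / 2 - 2)
              / (1 - 2 * \<rho> * x * cos \<alpha> - 2 * \<rho> * y * sin \<alpha> + \<rho>\<^sup>2) powr (real n / 2 - 1))
          \<partial>lborel) = (\<integral>\<^sup>+ y \<in> {-r..r}. ennreal (G y) \<partial>lborel)"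
    by (simp add: G_def r_def m_def s_def)
  also have "\<dots> = (\<integral>\<^sup>+y. (ennreal (G y) + ennreal (G (-y))) * indicator {0..r} y \<partial>lborel)"
    by (rule reflect) measurable
  also have "\<dots> = (\<integral>\<^sup>+y. (\<Sum>j. ennreal (T j y * indicator {0..r} y)) \<partial>lborel)"
  proof (intro nn_integral_cong_AE eventually_mono[OF AE_lborel_singleton[of r]])
    fix y assume "y \<noteq> r"
    show "(ennreal (G y) + ennreal (G (-y))) * indicator {0..r} y = (\<Sum>j. ennreal (T j y * indicator {0..r} y))"
    proof (cases "y \<in> {0..r}")
      case True
      with \<open>y \<noteq> r\<close> have y: "0 \<le> y" "y < r" by auto
      have "(\<Sum>j. ennreal (T j y)) = ennreal (G y + G (-y))"
        by (rule suminf_ennreal_eq[OF Tnn Tsums[OF y]])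
      then show ?thesis using True Gnn by (simp add: ennreal_plus)
    qed simp
  qed
  also have "\<dots> = (\<Sum>j. (\<integral>\<^sup>+y. ennreal (T j y * indicator {0..r} y) \<partial>lborel))"
    by (rule nn_integral_suminf) measurable
  also have "\<dots> = (\<Sum>j. ennreal (A powr (-s) * (2 * c j * q^(2*j)) * (r powr (2*m+2*j+1) * Beta (j+1/2) (m+1) / 2)))"
  proof (rule suminf_cong)
    fix j
    have K: "A powr (-s) * (2 * c j * q^(2*j)) \<ge> 0" using c0 q0 by simp
    have "(\<integral>\<^sup>+y. ennreal (T j y * indicator {0..r} y) \<partial>lborel)
       = (\<integral>\<^sup>+y. ennreal (A powr (-s) * (2 * c j * q^(2*j))) * ennreal ((r\<^sup>2 - y\<^sup>2) powr m * y^(2*j) * indicator {0..r} y) \<partial>lborel)"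
      by (intro nn_integral_cong, subst ennreal_mult'[OF K, symmetric]) (simp add: T_def mult.assoc)
    also have "\<dots> = ennreal (A powr (-s) * (2 * c j * q^(2*j))) * (\<integral>\<^sup>+y. ennreal ((r\<^sup>2 - y\<^sup>2) powr m * y^(2*j) * indicator {0..r} y) \<partial>lborel)"
      by (rule nn_integral_cmult) measurable
    also have "\<dots> = ennreal (A powr (-s) * (2 * c j * q^(2*j))) * ennreal (r powr (2*m+2*j+1) * Beta (j+1/2) (m+1) / 2)"
      by (simp only: half_beta[OF r m])
    also have "\<dots> = ennreal (A powr (-s) * (2 * c j * q^(2*j)) * (r powr (2*m+2*j+1) * Beta (j+1/2) (m+1) / 2))"
      by (rule ennreal_mult'[OF K, symmetric])
    finally show "(\<integral>\<^sup>+y. ennreal (T j y * indicator {0..r} y) \<partial>lborel) = \<dots>" .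
  qed
  also have "\<dots> = (\<Sum>j. ennreal (Beta (1/2) (m+1) * r powr (2*m+1) * A powr (-s) *
       (pochhammer ((real n - 2) / 4) j * pochhammer (real n / 4) j / (pochhammer ((real n - 1) / 2) j * fact j)
        * (4 * \<rho>\<^sup>2 * (sin \<alpha>)\<^sup>2 * (1 - x\<^sup>2) / (1 + \<rho>\<^sup>2 - 2 * \<rho> * x * cos \<alpha>)\<^sup>2) ^ j)))"
  proof (rule suminf_cong)
    fix j
    have e1: "s/2 = (real n - 2) / 4" "s/2 + 1/2 = real n / 4" "m + 3/2 = (real n - 1) / 2"
      by (auto simp: s_def m_def field_simps)
    have e1': "(real n - 2) / 4 + 1/2 = real n / 4" by (simp add: field_simps)
    have cid: "c j * Beta (real j + 1/2) (m+1) = Beta (1/2) (m+1) *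
       (pochhammer ((real n - 2) / 4) j * pochhammer (real n / 4) j / (pochhammer ((real n - 1) / 2) j * fact j))"
      using coeff_id[OF m, of s j] unfolding c_def e1(1) e1(3) e1' .
    have z: "4 * \<rho>\<^sup>2 * (sin \<alpha>)\<^sup>2 * (1 - x\<^sup>2) / (1 + \<rho>\<^sup>2 - 2 * \<rho> * x * cos \<alpha>)\<^sup>2 = (q * r)\<^sup>2"
      using A by (simp add: q_def b_def r2[symmetric] A_def[symmetric] power_mult_distrib power_divide)
    have rp: "r powr (2*m+2*j+1) = r powr (2*m+1) * r^(2*j)"
    proof -
      have "r powr (2*m+2*j+1) = r powr (2*m+1) * r powr (real (2*j))"
        by (simp add: powr_add[symmetric] algebra_simps)
      then show ?thesis using powr_realpow[OF r, of "2*j"] by simp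
    qed
    show "ennreal (A powr (-s) * (2 * c j * q^(2*j)) * (r powr (2*m+2*j+1) * Beta (j+1/2) (m+1) / 2)) = ennreal (Beta (1/2) (m+1) * r powr (2*m+1) * A powr (-s) *
       (pochhammer ((real n - 2) / 4) j * pochhammer (real n / 4) j / (pochhammer ((real n - 1) / 2) j * fact j)
        * (4 * \<rho>\<^sup>2 * (sin \<alpha>)\<^sup>2 * (1 - x\<^sup>2) / (1 + \<rho>\<^sup>2 - 2 * \<rho> * x * cos \<alpha>)\<^sup>2) ^ j))"
    proof -
      have "A powr (-s) * (2 * c j * q^(2*j)) * (r powr (2*m+2*j+1) * Beta (j+1/2) (m+1) / 2)
          = A powr (-s) * q^(2*j) * r powr (2*m+1) * r^(2*j) * (c j * Beta (real j + 1/2) (m+1))"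
        unfolding rp by (simp add: algebra_simps)
      also have "\<dots> = Beta (1/2) (m+1) * r powr (2*m+1) * A powr (-s) *
       (pochhammer ((real n - 2) / 4) j * pochhammer (real n / 4) j / (pochhammer ((real n - 1) / 2) j * fact j)
        * ((q * r)\<^sup>2) ^ j)"
        unfolding cid by (simp add: power_mult_distrib power_mult[symmetric] algebra_simps)
      finally show ?thesis unfolding z by simp
    qed
  qed
  also have "\<dots> = ennreal (Beta (1/2) (m+1) * r powr (2*m+1) * A powr (-s)) *
       hyp2F1 ((real n - 2) / 4) (real n / 4) ((real n - 1) / 2)
             (4 * \<rho>\<^sup>2 * (sin \<alpha>)\<^sup>2 * (1 - x\<^sup>2) / (1 + \<rho>\<^sup>2 - 2 * \<rho> * x * cos \<alpha>)\<^sup>2)"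
  proof -
    have K: "Beta (1/2) (m+1) * r powr (2*m+1) * A powr (-s) \<ge> 0"
    proof -
      have "Beta (1/2) (m+1) > 0" unfolding Beta_def using m by (intro divide_pos_pos mult_pos_pos Gamma_real_pos) auto
      then show ?thesis by simp
    qed
    show ?thesis unfolding hyp2F1_def ennreal_suminf_cmult[symmetric]
      by (intro suminf_cong) (simp only: ennreal_mult'[OF K, symmetric])
  qed
  also have "Beta (1/2) (m+1) * r powr (2*m+1) * A powr (-s) = Beta (1/2) (real n / 2 - 1)
            * (1 - x\<^sup>2) powr ((real n - 3) / 2)
            / (1 + \<rho>\<^sup>2 - 2 * \<rho> * x * cos \<alpha>) powr (real n / 2 - 1)"
  proof -
    have "(1 - x\<^sup>2) powr ((real n - 3) / 2) = (r powr 2) powr ((real n - 3) / 2)"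
      using r by (simp add: r2)
    also have "\<dots> = r powr (2 * ((real n - 3) / 2))" by (simp add: powr_powr)
    also have "2 * ((real n - 3) / 2) = 2*m+1" by (simp add: m_def field_simps)
    finally have "(1 - x\<^sup>2) powr ((real n - 3) / 2) = r powr (2*m+1)" .
    moreover have "m + 1 = s" by (simp add: m_def s_def)
    ultimately show ?thesis unfolding A_def[symmetric] s_def[symmetric]
      by (simp only: powr_minus divide_inverse)
  qed
  finally show ?thesis .
qed

end
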